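(* Let $f$ be an additive function from the positive integers to the nonnegative integers with $f(p)\ge1$ for every prime $p$. Let $n=\prod_{i=1}^k p_i^{e_i}$ with distinct primes $p_i$ and $e_i\ge1$. Then $n$ is $f$-practical if and only if $$f(p_i^e)\le 1+\sum_{\substack{d\mid n\\ f(d)<f(p_i^e)}} f(d)$$ holds for every $1\le i\le k$ and every $1\le e\le e_i$.
   Context: $f$ additive means $f(ab)=f(a)+f(b)$ whenever $\gcd(a,b)=1$ (so $f(1)=0$). $S_f(n)=\sum_{d\mid n}f(d)$. A positive integer $n$ is $f$-practical if every positive integer $m\le S_f(n)$ equals $\sum_{d\in\mathcal{D}}f(d)$ for some set $\mathcal{D}$ of distinct divisors of $n$. *)

theory Defs
  imports "HOL-Computational_Algebra.Primes"
begin

definition additive_fun :: "(nat \<Rightarrow> nat) \<Rightarrow> bool" where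
  "additive_fun f \<longleftrightarrow>
     (\<forall>a b. a > 0 \<longrightarrow> b > 0 \<longrightarrow> coprime a b \<longrightarrow> f (a * b) = f a + f b)"

definition S_f :: "(nat \<Rightarrow> nat) \<Rightarrow> nat \<Rightarrow> nat" where
  "S_f f n = (\<Sum>d\<in>{d. d dvd n}. f d)"

definition f_practical :: "(nat \<Rightarrow> nat) \<Rightarrow> nat \<Rightarrow> bool" where
  "f_practical f n \<longleftrightarrow>
     (\<forall>m. 1 \<le> m \<and> m \<le> S_f f n \<longrightarrow>
        (\<exists>D. D \<subseteq> {d. d dvd n} \<and> m = (\<Sum>d\<in>D. f d)))"

end

theory Submission
  imports Defs
begin

lemma complete_iff:
  fixes w :: "'a \<Rightarrow> nat"
  assumes "finite A"
  shows "(\<forall>m. 1 \<le> m \<and> m \<le> sum w A \<longrightarrow> (\<exists>D. D \<subseteq> A \<and> m = sum w D)) \<longleftrightarrow>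
         (\<forall>x\<in>A. w x \<le> 1 + sum w {y\<in>A. w y < w x})"
proof
  assume C: "\<forall>m. 1 \<le> m \<and> m \<le> sum w A \<longrightarrow> (\<exists>D. D \<subseteq> A \<and> m = sum w D)"
  show "\<forall>x\<in>A. w x \<le> 1 + sum w {y\<in>A. w y < w x}"
  proof (rule ballI, rule ccontr)
    fix x assume xA: "x \<in> A" and nl: "\<not> w x \<le> 1 + sum w {y\<in>A. w y < w x}"
    define L where "L = {y\<in>A. w y < w x}"
    have fL: "finite L" using assms unfolding L_def by auto
    have xL: "x \<notin> L" unfolding L_def by auto
    have "sum w (insert x L) \<le> sum w A"
      using xA assms by (intro sum_mono2) (auto simp: L_def)
    hence "w x + sum w L \<le> sum w A" using fL xL by simp
    moreover have "w x > 1 + sum w L" using nl unfolding L_def by simp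
    ultimately have "1 \<le> 1 + sum w L \<and> 1 + sum w L \<le> sum w A" by simp
    then obtain D where D: "D \<subseteq> A" "1 + sum w L = sum w D"
      using C by blast
    show False
    proof (cases "D \<subseteq> L")
      case True
      then have "sum w D \<le> sum w L" using fL by (intro sum_mono2) auto
      then show False using D by simp
    next
      case False
      then obtain y where y: "y \<in> D" "y \<notin> L" by auto
      then have "w x \<le> w y" using D unfolding L_def by auto
      moreover have "w y \<le> sum w D"
        using y D assms by (intro member_le_sum) (auto intro: finite_subset)
      ultimately show False using D nl unfolding L_def by simp
    qed
  qed
next
  assume H: "\<forall>x\<in>A. w x \<le> 1 + sum w {y\<in>A. w y < w x}"
  from assms H show "\<forall>m. 1 \<le> m \<and> m \<le> sum w A \<longrightarrow> (\<exists>D. D \<subseteq> A \<and> m = sum w D)"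
  proof (induction "card A" arbitrary: A)
    case 0
    then show ?case by auto
  next
    case (Suc k)
    then have ne: "A \<noteq> {}" by auto
    obtain x where xA: "x \<in> A" and xmax: "\<forall>y\<in>A. w y \<le> w x"
      using Suc.prems(1) ne
    proof -
      have "Max (w ` A) \<in> w ` A" using Suc.prems(1) ne by simp
      then obtain x where "x \<in> A" "w x = Max (w ` A)" by auto
      moreover have "\<forall>y\<in>A. w y \<le> Max (w ` A)" using Suc.prems(1) by simp
      ultimately show ?thesis using that by auto
    qed
    define B where "B = A - {x}"
    have fB: "finite B" using Suc.prems(1) B_def by auto
    have cB: "k = card B" using Suc.hyps(2) xA B_def Suc.prems(1) by simp
    have setB: "\<And>y. y \<in> B \<Longrightarrow> {z\<in>B. w z < w y} = {z\<in>A. w z < w y}"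
      using xmax unfolding B_def by auto
    have HB: "\<forall>y\<in>B. w y \<le> 1 + sum w {z\<in>B. w z < w y}"
      using Suc.prems(2) setB unfolding B_def by auto
    have IH: "\<forall>m. 1 \<le> m \<and> m \<le> sum w B \<longrightarrow> (\<exists>D. D \<subseteq> B \<and> m = sum w D)"
      using Suc.hyps(1)[OF cB fB HB] .
    have sA: "sum w A = w x + sum w B"
      using Suc.prems(1) xA B_def by (simp add: sum.remove)
    have "sum w {y\<in>A. w y < w x} \<le> sum w B"
      using fB unfolding B_def by (intro sum_mono2) auto
    hence wx: "w x \<le> 1 + sum w B" using Suc.prems(2) xA by fastforce
    show ?case
    proof (intro allI impI)
      fix m assume m: "1 \<le> m \<and> m \<le> sum w A"
      show "\<exists>D. D \<subseteq> A \<and> m = sum w D"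
      proof (cases "m \<le> sum w B")
        case True
        then show ?thesis using IH m B_def by blast
      next
        case False
        show ?thesis
        proof (cases "m = w x")
          case True
          then show ?thesis using xA by (intro exI[of _ "{x}"]) auto
        next
          case mx: False
          then have "m > w x" using False wx by simp
          then obtain D where D: "D \<subseteq> B" "m - w x = sum w D"
          proof -
            have "1 \<le> m - w x \<and> m - w x \<le> sum w B" using \<open>m > w x\<close> m sA by linarith
            then show ?thesis using IH that by blast
          qed
          have "x \<notin> D" using D B_def by auto
          moreover have "finite D" using D fB finite_subset by auto
          ultimately have "sum w (insert x D) = w x + sum w D" by simp
          then show ?thesis using D \<open>m > w x\<close> B_def xA
            by (intro exI[of _ "insert x D"]) auto
        qed
      qed
    qed
  qed
qed


lemma additive_one:
  assumes "additive_fun f" shows "f 1 = 0"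
proof -
  have H: "\<forall>a b. a>0 \<longrightarrow> b>0 \<longrightarrow> coprime a b \<longrightarrow> f (a*b) = f a + f b"
    using assms unfolding additive_fun_def by simp
  show ?thesis using H[rule_format, of 1 1] by simp
qed

lemma all_divisors:
  fixes f :: "nat \<Rightarrow> nat" and n :: nat
  assumes add: "additive_fun f"
    and n0: "n > 0"
    and PP: "\<forall>p\<in>prime_factors n. \<forall>e. 1 \<le> e \<and> e \<le> multiplicity p n \<longrightarrow>
       f (p ^ e) \<le> 1 + (\<Sum>d\<in>{d. d dvd n \<and> f d < f (p ^ e)}. f d)"
  shows "d dvd n \<Longrightarrow> f d \<le> 1 + (\<Sum>d'\<in>{d'. d' dvd n \<and> f d' < f d}. f d')"
proof (induction d rule: less_induct)
  case (less d)
  have fin: "finite {d'. d' dvd n \<and> f d' < f d}" using n0 by auto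
  have d0: "d > 0" using less.prems n0 by (auto intro: Nat.gr0I)
  show ?case
  proof (cases "d = 1")
    case True
    then show ?thesis using additive_one[OF add] by simp
  next
    case False
    then obtain p where p: "prime p" "p dvd d" using prime_factor_nat by blast
    define e where "e = multiplicity p d"
    define a where "a = p ^ e"
    define b where "b = d div a"
    have ad: "a dvd d" unfolding a_def e_def by (rule multiplicity_dvd)
    have dab: "d = a * b" unfolding b_def using ad by simp
    have npb: "\<not> p dvd b" unfolding b_def a_def e_def by (rule multiplicity_decompose) (use d0 p in auto)
    have e1: "e \<ge> 1" unfolding e_def using p d0
      by (simp add: prime_multiplicity_gt_zero_iff Suc_le_eq)
    have a1: "a > 1" unfolding a_def using e1 p
      using one_less_power[of p e] prime_gt_1_nat[OF p(1)] by simp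
    have b0: "b > 0" using dab d0 by (cases "b = 0") auto
    have cop: "coprime a b" unfolding a_def
      using npb p by (simp add: coprime_power_left_iff prime_imp_coprime)
    have fd: "f d = f a + f b" using add a1 b0 cop dab unfolding additive_fun_def by simp
    show ?thesis
    proof (cases "b = 1")
      case True
      then have "d = p ^ e" using dab a_def by simp
      moreover have "p \<in> prime_factors n" using p less.prems n0
        by (auto intro: prime_factorsI dvd_trans)
      moreover have "e \<le> multiplicity p n" using less.prems n0 p \<open>d = p ^ e\<close>
        by (intro multiplicity_geI) (auto simp: prime_gt_1_nat)
      ultimately show ?thesis using PP e1 by auto
    next
      case False
      then have b1: "b > 1" using b0 by simp
      have altd: "a < d" using dab b1 a1 by simp
      have bltd: "b < d" using dab b1 a1 by simp
      have adn: "a dvd n" using ad less.prems by (rule dvd_trans)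
      have bdn: "b dvd n" using dab less.prems dvd_trans[of b d n] by simp
      show ?thesis
      proof (cases "f a = 0")
        case True
        then show ?thesis using less.IH[OF bltd bdn] fd by simp
      next
        case fa: False
        show ?thesis
        proof (cases "f b = 0")
          case True
          then show ?thesis using less.IH[OF altd adn] fd by simp
        next
          case fb: False
          have "a \<noteq> b" using cop a1 by auto
          have "{a, b} \<subseteq> {d'. d' dvd n \<and> f d' < f d}" using fa fb fd adn bdn by auto
          then have "sum f {a, b} \<le> sum f {d'. d' dvd n \<and> f d' < f d}"
            using fin by (intro sum_mono2) auto
          then show ?thesis using \<open>a \<noteq> b\<close> fd by simp
        qed
      qed
    qed
  qed
qed

theorem lemma6p1:
  fixes f :: "nat \<Rightarrow> nat" and n :: nat
  assumes "additive_fun f"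
    and "\<And>p. prime p \<Longrightarrow> f p \<ge> 1"
    and "n > 0"
  shows "f_practical f n \<longleftrightarrow>
    (\<forall>p\<in>prime_factors n. \<forall>e. 1 \<le> e \<and> e \<le> multiplicity p n \<longrightarrow>
       f (p ^ e) \<le> 1 + (\<Sum>d\<in>{d. d dvd n \<and> f d < f (p ^ e)}. f d))"
proof -
  have fin: "finite {d. d dvd n}" using assms(3) by auto
  have set_eq: "\<And>x. {y \<in> {d. d dvd n}. f y < f x} = {d. d dvd n \<and> f d < f x}" by auto
  have "f_practical f n \<longleftrightarrow> (\<forall>x\<in>{d. d dvd n}. f x \<le> 1 + sum f {d. d dvd n \<and> f d < f x})"
    unfolding f_practical_def S_f_def using complete_iff[OF fin, of f] set_eq by simp
  also have "\<dots> \<longleftrightarrow> (\<forall>p\<in>prime_factors n. \<forall>e. 1 \<le> e \<and> e \<le> multiplicity p n \<longrightarrow>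
       f (p ^ e) \<le> 1 + (\<Sum>d\<in>{d. d dvd n \<and> f d < f (p ^ e)}. f d))"
  proof
    assume A: "\<forall>x\<in>{d. d dvd n}. f x \<le> 1 + sum f {d. d dvd n \<and> f d < f x}"
    show "\<forall>p\<in>prime_factors n. \<forall>e. 1 \<le> e \<and> e \<le> multiplicity p n \<longrightarrow>
       f (p ^ e) \<le> 1 + (\<Sum>d\<in>{d. d dvd n \<and> f d < f (p ^ e)}. f d)"
    proof (intro ballI allI impI)
      fix p e assume "p \<in> prime_factors n" "1 \<le> e \<and> e \<le> multiplicity p n"
      then have "p ^ e dvd n" by (intro multiplicity_dvd') auto
      then show "f (p ^ e) \<le> 1 + (\<Sum>d\<in>{d. d dvd n \<and> f d < f (p ^ e)}. f d)" using A by auto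
    qed
  next
    assume "\<forall>p\<in>prime_factors n. \<forall>e. 1 \<le> e \<and> e \<le> multiplicity p n \<longrightarrow>
       f (p ^ e) \<le> 1 + (\<Sum>d\<in>{d. d dvd n \<and> f d < f (p ^ e)}. f d)"
    then show "\<forall>x\<in>{d. d dvd n}. f x \<le> 1 + sum f {d. d dvd n \<and> f d < f x}"
      using all_divisors[OF assms(1) assms(3)] by auto
  qed
  finally show ?thesis .
qed

end
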